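(* Let $\mathcal{L}^-\subseteq\mathcal{L}$ be languages with $\mathcal{L}\setminus\mathcal{L}^-$ relational. Let $\mathbb{K}$ be an age in $\mathcal{L}$ such that both $\mathbb{K}$ and $\mathbb{K}\restriction\mathcal{L}^-$ are strong Fraïssé classes, let $\kappa$ be an infinite cardinal, and let $M^-$ be an $\mathcal{L}^-$-structure with $M^-\models \mathrm{Fr}_\kappa(\mathbb{K}\restriction\mathcal{L}^-)$. Suppose $\lambda\le \mathrm{cf}(\kappa)$ and $\mathbb{K}$ is closed under less than $\lambda$-unions. Then the partial order $\mathrm{Fn}^{M^-}_{\mathbb{K}}(\kappa)$ is $\lambda$-closed, i.e. for every $\gamma<\lambda$ and every sequence $\langle \mathcal{A}_i : i<\gamma\rangle$ of elements of $\mathrm{Fn}^{M^-}_{\mathbb{K}}(\kappa)$ with $\mathcal{A}_i\subseteq\mathcal{A}_j$ for $i<j<\gamma$, there is $\mathcal{B}\in\mathrm{Fn}^{M^-}_{\mathbb{K}}(\kappa)$ with $\mathcal{A}_i\subseteq\mathcal{B}$ for all $i<\gamma$.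
   Context: Languages may be many-sorted. For an $\mathcal{L}$-structure $\mathcal{M}$ and a set $A$ of its elements, the substructure generated by $A$ is the smallest substructure of $\mathcal{M}$ containing $A$ (closure of $A$ under all terms). $\mathcal{M}$ is $<\lambda$-generated if it is generated by a set of size $<\lambda$; for a tuple $\mathbf{a}$, "$\mathbf{a}$ generates $\mathcal{A}$" means the set of its entries does. An age in $\mathcal{L}$ is a class of $\mathcal{L}$-structures closed under isomorphism. For an age $\mathbb{K}$: $\mathbb{K}_\kappa$ is the class of elements of $\mathbb{K}$ that are $<\kappa$-generated; for $\mathcal{L}^-\subseteq\mathcal{L}$, $\mathbb{K}\restriction\mathcal{L}^-=\{\mathcal{A}\restriction\mathcal{L}^-:\mathcal{A}\in\mathbb{K}\}$. $\mathbb{K}$ has HP if it is closed under substructures; JEP if any two members embed in a common member; AP if for embeddings $i_1:\mathcal{A}_0\to\mathcal{A}_1$, $i_2:\mathcal{A}_0\to\mathcal{A}_2$ in $\mathbb{K}$ there are $\mathcal{A}_3\in\mathbb{K}$ and embeddings $j_1:\mathcal{A}_1\to\mathcal{A}_3$, $j_2:\mathcal{A}_2\to\mathcal{A}_3$ with $j_1\circ i_1=j_2\circ i_2$; SAP if moreover one can always choose these with $j_1[\mathcal{A}_1]\cap j_2[\mathcal{A}_2]=(j_1\circ i_1)[\mathcal{A}_0]$. A Fraïssé class is an age with HP, JEP, AP; a strong Fraïssé class is a Fraïssé class with SAP. $\mathbb{K}$ is closed under less than $\lambda$-unions if for every $\gamma<\lambda$ and every chain $(\mathcal{A}_i)_{i<\gamma}$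 in $\mathbb{K}$ with $\mathcal{A}_i\subseteq\mathcal{A}_j$ for $i<j$, $\bigcup_{i<\gamma}\mathcal{A}_i\in\mathbb{K}$. For an $\mathcal{L}$-structure $\mathcal{A}$ and tuple $\mathbf{a}$ in it, $\mathrm{qftp}^{\mathcal{A}}(\mathbf{a})(\mathbf{x})$ is the set of literals in variables $\mathbf{x}$ satisfied by $\mathbf{a}$ in $\mathcal{A}$. $\mathrm{Fr}_\kappa(\mathbb{K})\subseteq\mathcal{L}_{\infty\kappa}(\mathcal{L})$ is the theory with axioms: (a) for all $\mathcal{A}\in\mathbb{K}$ and tuples $\mathbf{a}$ generating $\mathcal{A}$: $(\exists\mathbf{x})\bigwedge\mathrm{qftp}^{\mathcal{A}}(\mathbf{a})(\mathbf{x})$; (b) for all $\mathcal{A},\mathcal{B}\in\mathbb{K}$ with $\mathcal{A}\subseteq\mathcal{B}$, $\mathbf{a}$ generating $\mathcal{A}$ and $\mathbf{b}$ generating $\mathcal{B}$: $(\forall\mathbf{x})[\bigwedge\mathrm{qftp}^{\mathcal{A}}(\mathbf{a})(\mathbf{x})\to(\exists\mathbf{y})\bigwedge\mathrm{qftp}^{\mathcal{B}}(\mathbf{a}\mathbf{b})(\mathbf{x}\mathbf{y})]$. For an $\mathcal{L}^-$-structure $M^-$, $\mathbb{K}[M^-]=\{\mathcal{A}\in\mathbb{K}:\mathcal{A}\restriction\mathcal{L}^-\text{ is a substructure of }M^-\}$. $\mathrm{Fn}^{M^-}_{\mathbb{K}}(\kappa)$ is the partial order whose elements are the structures in $\mathbb{K}_\kappa[M^-]$,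 ordered by $\mathcal{M}\le\mathcal{N}$ iff $\mathcal{N}\subseteq\mathcal{M}$ (substructure). *)

theory Defs
  imports Main
begin

record ('s, 'f, 'r) lang =
  lsorts :: "'s set"
  lfuns  :: "'f set"
  lrels  :: "'r set"
  farity :: "'f \<Rightarrow> 's list"
  fsort  :: "'f \<Rightarrow> 's"
  rarity :: "'r \<Rightarrow> 's list"

definition lang_wf :: "('s, 'f, 'r) lang \<Rightarrow> bool" where
  "lang_wf L \<longleftrightarrow>
     (\<forall>f\<in>lfuns L. set (farity L f) \<subseteq> lsorts L \<and> fsort L f \<in> lsorts L) \<and>
     (\<forall>r\<in>lrels L. set (rarity L r) \<subseteq> lsorts L)"

definition relational_expansion :: "('s, 'f, 'r) lang \<Rightarrow> ('s, 'f, 'r) lang \<Rightarrow> bool" where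
  "relational_expansion Lm L \<longleftrightarrow>
     lsorts Lm = lsorts L \<and> lfuns Lm = lfuns L \<and> farity Lm = farity L \<and>
     fsort Lm = fsort L \<and> rarity Lm = rarity L \<and> lrels Lm \<subseteq> lrels L"

record ('s, 'f, 'r, 'u) struc =
  sdom :: "'s \<Rightarrow> 'u set"
  fint :: "'f \<Rightarrow> 'u list \<Rightarrow> 'u"
  rint :: "'r \<Rightarrow> 'u list set"

definition elems :: "('s, 'f, 'r) lang \<Rightarrow> ('s, 'f, 'r, 'u) struc \<Rightarrow> 'u set" where
  "elems L A = (\<Union>s\<in>lsorts L. sdom A s)"

definition args_in :: "('s, 'f, 'r, 'u) struc \<Rightarrow> 's list \<Rightarrow> 'u list \<Rightarrow> bool" where
  "args_in A ss xs \<longleftrightarrow> length xs = length ss \<and> (\<forall>i<length xs. xs ! i \<in> sdom A (ss ! i))"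

definition is_struc :: "('s, 'f, 'r) lang \<Rightarrow> ('s, 'f, 'r, 'u) struc \<Rightarrow> bool" where
  "is_struc L A \<longleftrightarrow>
     (\<forall>s\<in>lsorts L. \<forall>t\<in>lsorts L. s \<noteq> t \<longrightarrow> sdom A s \<inter> sdom A t = {}) \<and>
     (\<forall>f\<in>lfuns L. \<forall>xs. args_in A (farity L f) xs \<longrightarrow> fint A f xs \<in> sdom A (fsort L f)) \<and>
     (\<forall>r\<in>lrels L. \<forall>xs\<in>rint A r. args_in A (rarity L r) xs)"

definition substruc :: "('s, 'f, 'r) lang \<Rightarrow> ('s, 'f, 'r, 'u) struc \<Rightarrow> ('s, 'f, 'r, 'u) struc \<Rightarrow> bool" where
  "substruc L A B \<longleftrightarrow> is_struc L A \<and> is_struc L B \<and>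
     (\<forall>s\<in>lsorts L. sdom A s \<subseteq> sdom B s) \<and>
     (\<forall>f\<in>lfuns L. \<forall>xs. args_in A (farity L f) xs \<longrightarrow> fint A f xs = fint B f xs) \<and>
     (\<forall>r\<in>lrels L. \<forall>xs. args_in A (rarity L r) xs \<longrightarrow> (xs \<in> rint A r \<longleftrightarrow> xs \<in> rint B r))"

definition embedding :: "('s, 'f, 'r) lang \<Rightarrow> ('u \<Rightarrow> 'u) \<Rightarrow> ('s, 'f, 'r, 'u) struc \<Rightarrow> ('s, 'f, 'r, 'u) struc \<Rightarrow> bool" where
  "embedding L h A B \<longleftrightarrow> is_struc L A \<and> is_struc L B \<and>
     (\<forall>s\<in>lsorts L. h ` sdom A s \<subseteq> sdom B s) \<and>
     inj_on h (elems L A) \<and>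
     (\<forall>f\<in>lfuns L. \<forall>xs. args_in A (farity L f) xs \<longrightarrow> h (fint A f xs) = fint B f (map h xs)) \<and>
     (\<forall>r\<in>lrels L. \<forall>xs. args_in A (rarity L r) xs \<longrightarrow> (xs \<in> rint A r \<longleftrightarrow> map h xs \<in> rint B r))"

definition isomorphism :: "('s, 'f, 'r) lang \<Rightarrow> ('u \<Rightarrow> 'u) \<Rightarrow> ('s, 'f, 'r, 'u) struc \<Rightarrow> ('s, 'f, 'r, 'u) struc \<Rightarrow> bool" where
  "isomorphism L h A B \<longleftrightarrow> embedding L h A B \<and> (\<forall>s\<in>lsorts L. h ` sdom A s = sdom B s)"

definition reduct :: "('s, 'f, 'r) lang \<Rightarrow> ('s, 'f, 'r, 'u) struc \<Rightarrow> ('s, 'f, 'r, 'u) struc" where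
  "reduct Lm A = A\<lparr>rint := (\<lambda>r. if r \<in> lrels Lm then rint A r else {})\<rparr>"

inductive_set gen_closure :: "('s, 'f, 'r) lang \<Rightarrow> ('s, 'f, 'r, 'u) struc \<Rightarrow> 'u set \<Rightarrow> 'u set"
  for L A X where
  base: "x \<in> X \<Longrightarrow> x \<in> gen_closure L A X"
| app: "f \<in> lfuns L \<Longrightarrow> args_in A (farity L f) xs \<Longrightarrow> \<forall>x\<in>set xs. x \<in> gen_closure L A X
          \<Longrightarrow> fint A f xs \<in> gen_closure L A X"

definition generated_by :: "('s, 'f, 'r) lang \<Rightarrow> ('s, 'f, 'r, 'u) struc \<Rightarrow> 'u set \<Rightarrow> bool" where
  "generated_by L A X \<longleftrightarrow> X \<subseteq> elems L A \<and> elems L A = gen_closure L A X"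

definition lt_generated :: "('s, 'f, 'r) lang \<Rightarrow> 'k rel \<Rightarrow> ('s, 'f, 'r, 'u) struc \<Rightarrow> bool" where
  "lt_generated L \<kappa> A \<longleftrightarrow> (\<exists>X. ordLess2 (card_of X) \<kappa> \<and> generated_by L A X)"

definition age :: "('s, 'f, 'r) lang \<Rightarrow> ('s, 'f, 'r, 'u) struc set \<Rightarrow> bool" where
  "age L K \<longleftrightarrow> (\<forall>A\<in>K. is_struc L A) \<and> (\<forall>A B h. A \<in> K \<longrightarrow> isomorphism L h A B \<longrightarrow> B \<in> K)"

definition lt_gen_class :: "('s, 'f, 'r) lang \<Rightarrow> 'k rel \<Rightarrow> ('s, 'f, 'r, 'u) struc set \<Rightarrow> ('s, 'f, 'r, 'u) struc set" where
  "lt_gen_class L \<kappa> K = {A \<in> K. lt_generated L \<kappa> A}"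

text \<open>K restricted to Lm, as an age (i.e. closed under Lm-isomorphism).\<close>
definition restr_class :: "('s, 'f, 'r) lang \<Rightarrow> ('s, 'f, 'r, 'u) struc set \<Rightarrow> ('s, 'f, 'r, 'u) struc set" where
  "restr_class Lm K = {B. is_struc Lm B \<and> (\<exists>A\<in>K. \<exists>h. isomorphism Lm h (reduct Lm A) B)}"

definition HP :: "('s, 'f, 'r) lang \<Rightarrow> ('s, 'f, 'r, 'u) struc set \<Rightarrow> bool" where
  "HP L K \<longleftrightarrow> (\<forall>A B. B \<in> K \<longrightarrow> substruc L A B \<longrightarrow> A \<in> K)"

definition JEP :: "('s, 'f, 'r) lang \<Rightarrow> ('s, 'f, 'r, 'u) struc set \<Rightarrow> bool" where
  "JEP L K \<longleftrightarrow> (\<forall>A\<in>K. \<forall>B\<in>K. \<exists>C\<in>K. \<exists>f g. embedding L f A C \<and> embedding L g B C)"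

definition AP :: "('s, 'f, 'r) lang \<Rightarrow> ('s, 'f, 'r, 'u) struc set \<Rightarrow> bool" where
  "AP L K \<longleftrightarrow> (\<forall>A0\<in>K. \<forall>A1\<in>K. \<forall>A2\<in>K. \<forall>i1 i2.
      embedding L i1 A0 A1 \<longrightarrow> embedding L i2 A0 A2 \<longrightarrow>
      (\<exists>A3\<in>K. \<exists>j1 j2. embedding L j1 A1 A3 \<and> embedding L j2 A2 A3 \<and>
         (\<forall>x\<in>elems L A0. j1 (i1 x) = j2 (i2 x))))"

definition SAP :: "('s, 'f, 'r) lang \<Rightarrow> ('s, 'f, 'r, 'u) struc set \<Rightarrow> bool" where
  "SAP L K \<longleftrightarrow> (\<forall>A0\<in>K. \<forall>A1\<in>K. \<forall>A2\<in>K. \<forall>i1 i2.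
      embedding L i1 A0 A1 \<longrightarrow> embedding L i2 A0 A2 \<longrightarrow>
      (\<exists>A3\<in>K. \<exists>j1 j2. embedding L j1 A1 A3 \<and> embedding L j2 A2 A3 \<and>
         (\<forall>x\<in>elems L A0. j1 (i1 x) = j2 (i2 x)) \<and>
         j1 ` elems L A1 \<inter> j2 ` elems L A2 = (j1 \<circ> i1) ` elems L A0))"

definition fraisse_class :: "('s, 'f, 'r) lang \<Rightarrow> ('s, 'f, 'r, 'u) struc set \<Rightarrow> bool" where
  "fraisse_class L K \<longleftrightarrow> age L K \<and> HP L K \<and> JEP L K \<and> AP L K"

definition strong_fraisse_class :: "('s, 'f, 'r) lang \<Rightarrow> ('s, 'f, 'r, 'u) struc set \<Rightarrow> bool" where
  "strong_fraisse_class L K \<longleftrightarrow> fraisse_class L K \<and> SAP L K"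

definition infinite_cardinal :: "'k rel \<Rightarrow> bool" where
  "infinite_cardinal \<kappa> \<longleftrightarrow> Card_order \<kappa> \<and> infinite (Field \<kappa>)"

text \<open>lambda <= cf(kappa): every cofinal subset of kappa has cardinality at least lambda.\<close>
definition le_cofinality :: "'l rel \<Rightarrow> 'k rel \<Rightarrow> bool" where
  "le_cofinality lam \<kappa> \<longleftrightarrow>
     (\<forall>S. S \<subseteq> Field \<kappa> \<and> (\<forall>a\<in>Field \<kappa>. \<exists>b\<in>S. (a, b) \<in> \<kappa>) \<longrightarrow> ordLeq2 lam (card_of S))"

definition is_chain :: "('s, 'f, 'r) lang \<Rightarrow> 'g rel \<Rightarrow> ('g \<Rightarrow> ('s, 'f, 'r, 'u) struc) \<Rightarrow> bool" where
  "is_chain L \<gamma> A \<longleftrightarrow> (\<forall>i j. (i, j) \<in> \<gamma> \<and> i \<noteq> j \<longrightarrow> substruc L (A i) (A j))"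

definition chain_union :: "('s, 'f, 'r) lang \<Rightarrow> 'g set \<Rightarrow> ('g \<Rightarrow> ('s, 'f, 'r, 'u) struc) \<Rightarrow> ('s, 'f, 'r, 'u) struc" where
  "chain_union L I A =
     \<lparr> sdom = (\<lambda>s. \<Union>i\<in>I. sdom (A i) s),
       fint = (\<lambda>f xs. fint (A (SOME i. i \<in> I \<and> args_in (A i) (farity L f) xs)) f xs),
       rint = (\<lambda>r. \<Union>i\<in>I. rint (A i) r) \<rparr>"

text \<open>Closed under less than lambda-unions; ordinals gamma < lambda are represented as
  well-orders gamma on the type of lambda with gamma <o lambda.\<close>
definition closed_lt_unions :: "('s, 'f, 'r) lang \<Rightarrow> 'l rel \<Rightarrow> ('s, 'f, 'r, 'u) struc set \<Rightarrow> bool" where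
  "closed_lt_unions L lam K \<longleftrightarrow>
     (\<forall>(\<gamma>::'l rel) A. Well_order \<gamma> \<and> ordLess2 \<gamma> lam \<and> (\<forall>i\<in>Field \<gamma>. A i \<in> K) \<and> is_chain L \<gamma> A
        \<longrightarrow> chain_union L (Field \<gamma>) A \<in> K)"

datatype ('f, 'v) trm = Var 'v | App 'f "('f, 'v) trm list"

inductive trm_sorted :: "('s, 'f, 'r) lang \<Rightarrow> ('v \<Rightarrow> 's) \<Rightarrow> 'v set \<Rightarrow> ('f, 'v) trm \<Rightarrow> 's \<Rightarrow> bool"
  for L \<sigma> J where
  var: "v \<in> J \<Longrightarrow> trm_sorted L \<sigma> J (Var v) (\<sigma> v)"
| app: "f \<in> lfuns L \<Longrightarrow> list_all2 (trm_sorted L \<sigma> J) ts (farity L f)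
          \<Longrightarrow> trm_sorted L \<sigma> J (App f ts) (fsort L f)"

fun eval :: "('s, 'f, 'r, 'u) struc \<Rightarrow> ('v \<Rightarrow> 'u) \<Rightarrow> ('f, 'v) trm \<Rightarrow> 'u" where
  "eval A a (Var v) = a v"
| "eval A a (App f ts) = fint A f (map (eval A a) ts)"

datatype ('f, 'r, 'v) atomic = Eq "('f, 'v) trm" "('f, 'v) trm" | Rel 'r "('f, 'v) trm list"

fun atomic_wf :: "('s, 'f, 'r) lang \<Rightarrow> ('v \<Rightarrow> 's) \<Rightarrow> 'v set \<Rightarrow> ('f, 'r, 'v) atomic \<Rightarrow> bool" where
  "atomic_wf L \<sigma> J (Eq t1 t2) \<longleftrightarrow> (\<exists>s. trm_sorted L \<sigma> J t1 s \<and> trm_sorted L \<sigma> J t2 s)"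
| "atomic_wf L \<sigma> J (Rel r ts) \<longleftrightarrow> r \<in> lrels L \<and> list_all2 (trm_sorted L \<sigma> J) ts (rarity L r)"

fun holds :: "('s, 'f, 'r, 'u) struc \<Rightarrow> ('v \<Rightarrow> 'u) \<Rightarrow> ('f, 'r, 'v) atomic \<Rightarrow> bool" where
  "holds A a (Eq t1 t2) \<longleftrightarrow> eval A a t1 = eval A a t2"
| "holds A a (Rel r ts) \<longleftrightarrow> map (eval A a) ts \<in> rint A r"

definition sort_of :: "('s, 'f, 'r) lang \<Rightarrow> ('s, 'f, 'r, 'u) struc \<Rightarrow> 'u \<Rightarrow> 's" where
  "sort_of L A x = (SOME s. s \<in> lsorts L \<and> x \<in> sdom A s)"

text \<open>m (a tuple in M indexed by J, with variables sorted like a) satisfies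
  the conjunction of qftp^A(a)(x), i.e. every literal (atomic formula or its negation)
  in the variables x_j (j in J) true of a in A is true of m in M.\<close>
definition realizes :: "('s, 'f, 'r) lang \<Rightarrow> 'v set \<Rightarrow> ('s, 'f, 'r, 'u) struc \<Rightarrow> ('v \<Rightarrow> 'u)
    \<Rightarrow> ('s, 'f, 'r, 'u) struc \<Rightarrow> ('v \<Rightarrow> 'u) \<Rightarrow> bool" where
  "realizes L J A a M m \<longleftrightarrow>
     (\<forall>v\<in>J. m v \<in> sdom M (sort_of L A (a v))) \<and>
     (\<forall>\<phi>. atomic_wf L (\<lambda>v. sort_of L A (a v)) J \<phi> \<longrightarrow> (holds A a \<phi> \<longleftrightarrow> holds M m \<phi>))"

text \<open>M satisfies Fr_kappa(K). Tuples of length < kappa are indexed by subsets J of the type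
  of kappa with |J| <o kappa; the concatenation xy is indexed by the disjoint sum.\<close>
definition models_Fr :: "('s, 'f, 'r) lang \<Rightarrow> 'k rel \<Rightarrow> ('s, 'f, 'r, 'u) struc set
    \<Rightarrow> ('s, 'f, 'r, 'u) struc \<Rightarrow> bool" where
  "models_Fr L \<kappa> K M \<longleftrightarrow>
     (\<forall>A\<in>K. \<forall>(J::'k set) a. ordLess2 (card_of J) \<kappa> \<and> generated_by L A (a ` J)
        \<longrightarrow> (\<exists>m. realizes L J A a M m)) \<and>
     (\<forall>A\<in>K. \<forall>B\<in>K. \<forall>(J1::'k set) (J2::'k set) a b.
        substruc L A B \<and> ordLess2 (card_of J1) \<kappa> \<and> ordLess2 (card_of J2) \<kappa> \<and>
        generated_by L A (a ` J1) \<and> generated_by L B (b ` J2)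
        \<longrightarrow> (\<forall>m. realizes L J1 A a M m \<longrightarrow>
               (\<exists>n. realizes L (Inl ` J1 \<union> Inr ` J2) B (case_sum a b) M (case_sum m n))))"

definition over :: "('s, 'f, 'r) lang \<Rightarrow> ('s, 'f, 'r, 'u) struc set \<Rightarrow> ('s, 'f, 'r, 'u) struc
    \<Rightarrow> ('s, 'f, 'r, 'u) struc set" where
  "over Lm K M = {A \<in> K. substruc Lm (reduct Lm A) M}"

definition Fn :: "('s, 'f, 'r) lang \<Rightarrow> ('s, 'f, 'r) lang \<Rightarrow> ('s, 'f, 'r, 'u) struc set
    \<Rightarrow> ('s, 'f, 'r, 'u) struc \<Rightarrow> 'k rel \<Rightarrow> ('s, 'f, 'r, 'u) struc set" where
  "Fn L Lm K M \<kappa> = over Lm (lt_gen_class L \<kappa> K) M"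

definition Fn_le :: "('s, 'f, 'r) lang \<Rightarrow> ('s, 'f, 'r, 'u) struc \<Rightarrow> ('s, 'f, 'r, 'u) struc \<Rightarrow> bool" where
  "Fn_le L A B \<longleftrightarrow> substruc L B A"

end

theory Submission
  imports Defs
begin


definition lin_chain where
  "lin_chain L I A \<longleftrightarrow> (\<forall>i\<in>I. \<forall>j\<in>I. i = j \<or> substruc L (A i) (A j) \<or> substruc L (A j) (A i))"

lemma args_in_mono:
  assumes "args_in A ss xs" "\<forall>s\<in>set ss. sdom A s \<subseteq> sdom B s"
  shows "args_in B ss xs"
  using assms unfolding args_in_def by (metis nth_mem subsetD)

lemma args_in_Cons: "args_in A (s # ss) (x # xs) \<longleftrightarrow> x \<in> sdom A s \<and> args_in A ss xs"
  unfolding args_in_def by (auto simp: nth_Cons split: nat.splits)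

lemma args_in_chain:
  assumes "set ss \<subseteq> lsorts L" "I \<noteq> {}" "lin_chain L I A"
    "args_in (chain_union L I A) ss xs"
  shows "\<exists>j\<in>I. args_in (A j) ss xs"
  using assms
proof (induction xs arbitrary: ss)
  case Nil
  then show ?case by (auto simp: args_in_def)
next
  case (Cons x xs)
  then obtain s ss' where ss: "ss = s # ss'"
    by (cases ss) (auto simp: args_in_def)
  with Cons.prems have x: "x \<in> (\<Union>i\<in>I. sdom (A i) s)" and r: "args_in (chain_union L I A) ss' xs"
    by (auto simp: args_in_Cons chain_union_def)
  from x obtain i where i: "i \<in> I" "x \<in> sdom (A i) s" by auto
  from Cons.IH[OF _ Cons.prems(2,3) r] Cons.prems(1) ss obtain j where j: "j \<in> I" "args_in (A j) ss' xs" by auto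
  have s: "s \<in> lsorts L" using Cons.prems(1) ss by auto
  from Cons.prems(3) i(1) j(1) have "i = j \<or> substruc L (A i) (A j) \<or> substruc L (A j) (A i)"
    unfolding lin_chain_def by blast
  then show ?case
  proof (elim disjE)
    assume "i = j" then show ?thesis using i j ss by (auto simp: args_in_Cons)
  next
    assume "substruc L (A i) (A j)"
    then have "sdom (A i) s \<subseteq> sdom (A j) s" using s unfolding substruc_def by auto
    then show ?thesis using i j ss by (auto simp: args_in_Cons)
  next
    assume "substruc L (A j) (A i)"
    then have "\<forall>s\<in>set ss'. sdom (A j) s \<subseteq> sdom (A i) s" using Cons.prems(1) ss unfolding substruc_def by auto
    then have "args_in (A i) ss' xs" using args_in_mono j(2) by blast
    then show ?thesis using i j ss by (auto simp: args_in_Cons)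
  qed
qed

lemma fint_chain:
  assumes "f \<in> lfuns L" "i \<in> I" "args_in (A i) (farity L f) xs" "lin_chain L I A"
  shows "fint (chain_union L I A) f xs = fint (A i) f xs"
proof -
  define j where "j = (SOME j. j \<in> I \<and> args_in (A j) (farity L f) xs)"
  have j: "j \<in> I \<and> args_in (A j) (farity L f) xs"
    unfolding j_def by (rule someI[of _ i]) (use assms in auto)
  have e: "fint (chain_union L I A) f xs = fint (A j) f xs"
    unfolding chain_union_def j_def by simp
  from assms(4) j assms(2) have "i = j \<or> substruc L (A i) (A j) \<or> substruc L (A j) (A i)"
    unfolding lin_chain_def by blast
  then show ?thesis using e j assms unfolding substruc_def by auto
qed

lemma sub_chain:
  assumes "i \<in> I" "lin_chain L I A" "\<forall>i\<in>I. is_struc L (A i)" "is_struc L (chain_union L I A)"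
  shows "substruc L (A i) (chain_union L I A)"
  unfolding substruc_def
proof (intro conjI ballI allI impI)
  show "is_struc L (A i)" using assms by auto
  show "is_struc L (chain_union L I A)" by fact
  show "sdom (A i) s \<subseteq> sdom (chain_union L I A) s" for s
    using assms(1) by (auto simp: chain_union_def)
  show "fint (A i) f xs = fint (chain_union L I A) f xs" if "f \<in> lfuns L" "args_in (A i) (farity L f) xs" for f xs
    using fint_chain[OF that(1) assms(1) that(2) assms(2)] by simp
  show "xs \<in> rint (A i) r \<longleftrightarrow> xs \<in> rint (chain_union L I A) r" if r: "r \<in> lrels L" "args_in (A i) (rarity L r) xs" for r xs
  proof
    assume "xs \<in> rint (A i) r" then show "xs \<in> rint (chain_union L I A) r"
      using assms(1) by (auto simp: chain_union_def)
  next
    assume "xs \<in> rint (chain_union L I A) r"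
    then obtain j where j: "j \<in> I" "xs \<in> rint (A j) r" by (auto simp: chain_union_def)
    from assms(2) j(1) assms(1) have "i = j \<or> substruc L (A i) (A j) \<or> substruc L (A j) (A i)"
      unfolding lin_chain_def by blast
    moreover have "args_in (A j) (rarity L r) xs" using assms(3) j r(1) unfolding is_struc_def by auto
    ultimately show "xs \<in> rint (A i) r" using j r unfolding substruc_def by auto
  qed
qed

lemma gen_closure_mono:
  assumes "lang_wf L" "substruc L A B" "x \<in> gen_closure L A X"
  shows "x \<in> gen_closure L B X"
  using assms(3)
proof (induction rule: gen_closure.induct)
  case (base x) then show ?case by (rule gen_closure.base)
next
  case (app f xs)
  have "args_in B (farity L f) xs"
    using args_in_mono[OF app(2)] assms(1,2) app(1) unfolding substruc_def lang_wf_def by blast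
  moreover have "fint A f xs = fint B f xs" using assms(2) app(1,2) unfolding substruc_def by blast
  ultimately show ?case using gen_closure.app[OF app(1)] app(3) by auto
qed

lemma gen_closure_elems:
  assumes "lang_wf L" "is_struc L A" "X \<subseteq> elems L A" "x \<in> gen_closure L A X"
  shows "x \<in> elems L A"
  using assms(4)
proof (induction rule: gen_closure.induct)
  case (base x) then show ?case using assms(3) by auto
next
  case (app f xs)
  then have "fint A f xs \<in> sdom A (fsort L f)" using assms(2) unfolding is_struc_def by blast
  moreover have "fsort L f \<in> lsorts L" using assms(1) app(1) unfolding lang_wf_def by blast
  ultimately show ?case unfolding elems_def by blast
qed

lemma reduct_simps[simp]: "sdom (reduct Lm A) = sdom A" "fint (reduct Lm A) = fint A"
  "rint (reduct Lm A) r = (if r \<in> lrels Lm then rint A r else {})"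
  by (auto simp: reduct_def)

lemma args_in_reduct[simp]: "args_in (reduct Lm A) ss xs = args_in A ss xs"
  by (simp add: args_in_def)

lemma is_struc_reduct:
  assumes "relational_expansion Lm L" "is_struc L A"
  shows "is_struc Lm (reduct Lm A)"
  using assms unfolding is_struc_def relational_expansion_def by auto

lemma reduct_chain_sub:
  assumes "lang_wf L" "relational_expansion Lm L" "I \<noteq> {}" "lin_chain L I A"
    "\<forall>i\<in>I. is_struc L (A i)" "is_struc L (chain_union L I A)"
    "\<forall>i\<in>I. substruc Lm (reduct Lm (A i)) M" "is_struc Lm M"
  shows "substruc Lm (reduct Lm (chain_union L I A)) M"
  unfolding substruc_def
proof (intro conjI ballI allI impI)
  let ?U = "chain_union L I A"
  have E: "lsorts Lm = lsorts L" "lfuns Lm = lfuns L" "farity Lm = farity L" "rarity Lm = rarity L"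
    "lrels Lm \<subseteq> lrels L"
    using assms(2) unfolding relational_expansion_def by auto
  show "is_struc Lm (reduct Lm ?U)" using is_struc_reduct assms(2,6) by blast
  show "is_struc Lm M" by fact
  show "sdom (reduct Lm ?U) s \<subseteq> sdom M s" if "s \<in> lsorts Lm" for s
    using assms(7) that unfolding substruc_def by (fastforce simp: chain_union_def)
  show "fint (reduct Lm ?U) f xs = fint M f xs" if f: "f \<in> lfuns Lm" "args_in (reduct Lm ?U) (farity Lm f) xs" for f xs
  proof -
    have so: "set (farity L f) \<subseteq> lsorts L" using assms(1) f(1) E unfolding lang_wf_def by auto
    obtain j where j: "j \<in> I" "args_in (A j) (farity L f) xs"
      using args_in_chain[OF so assms(3,4)] f E by (simp, blast)
    have "fint ?U f xs = fint (A j) f xs" using fint_chain[OF _ j(1) j(2) assms(4)] f E by auto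
    also have "\<dots> = fint M f xs" using assms(7) j f E unfolding substruc_def by auto
    finally show ?thesis by simp
  qed
  show "xs \<in> rint (reduct Lm ?U) r \<longleftrightarrow> xs \<in> rint M r" if r: "r \<in> lrels Lm" "args_in (reduct Lm ?U) (rarity Lm r) xs" for r xs
  proof -
    have rL: "r \<in> lrels L" using r E by auto
    have so: "set (rarity L r) \<subseteq> lsorts L" using assms(1) rL unfolding lang_wf_def by auto
    obtain j where j: "j \<in> I" "args_in (A j) (rarity L r) xs"
      using args_in_chain[OF so assms(3,4)] r E by (simp, blast)
    have "xs \<in> rint ?U r \<longleftrightarrow> xs \<in> rint (A j) r"
      using sub_chain[OF j(1) assms(4,5,6)] rL j(2) unfolding substruc_def by auto
    also have "\<dots> \<longleftrightarrow> xs \<in> rint M r" using assms(7) j r E unfolding substruc_def by auto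
    finally show ?thesis using r by simp
  qed
qed


context includes cardinal_syntax begin

lemma card_union_bound:
  assumes k: "Card_order \<kappa>" "infinite (Field \<kappa>)" and I: "|I| <o \<kappa>" and a: "a \<in> Field \<kappa>"
    and X: "\<forall>i\<in>I. |X i| \<le>o |underS \<kappa> a|"
  shows "|\<Union>i\<in>I. X i| <o \<kappa>"
proof -
  let ?B = "I <+> underS \<kappa> a"
  have B: "|?B| <o \<kappa>" using card_of_Plus_ordLess_infinite_Field[OF k(2,1) I card_of_underS[OF k(1) a]] .
  show ?thesis
  proof (cases "finite ?B")
    case True
    then have "finite I" "finite (underS \<kappa> a)" by auto
    then have "\<forall>i\<in>I. finite (X i)" using X card_of_ordLeq_finite by blast
    then have "finite (\<Union>i\<in>I. X i)" using \<open>finite I\<close> by blast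
    then show ?thesis using finite_ordLess_infinite[of "|\<Union>i\<in>I. X i|" \<kappa>] k
      by (metis card_of_Well_order card_order_on_well_order_on Field_card_of)
  next
    case False
    have "|I| \<le>o |?B|" by (rule card_of_Plus1)
    moreover have "\<forall>i\<in>I. |X i| \<le>o |?B|"
      using X card_of_Plus2[of "underS \<kappa> a" I] ordLeq_transitive by blast
    ultimately have "|\<Union>i\<in>I. X i| \<le>o |?B|" using card_of_UNION_ordLeq_infinite False by blast
    then show ?thesis using B ordLeq_ordLess_trans by blast
  qed
qed

lemma card_lt_underS:
  assumes k: "Card_order \<kappa>" and X: "|X| <o \<kappa>"
  shows "\<exists>b\<in>Field \<kappa>. |X| \<le>o |underS \<kappa> b|"
proof -
  have W: "Well_order \<kappa>" using k by (simp add: card_order_on_well_order_on)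
  obtain b where b: "b \<in> Field \<kappa>" "|X| =o Restr \<kappa> (underS \<kappa> b)"
    using ordLess_iff_ordIso_Restr[OF W card_of_Well_order] X by blast
  have F: "Field (Restr \<kappa> (underS \<kappa> b)) = underS \<kappa> b"
    using W wo_rel.underS_ofilter Field_Restr_ofilter unfolding wo_rel_def by fastforce
  have "|Field |X|| =o |Field (Restr \<kappa> (underS \<kappa> b))|" using card_of_cong[OF b(2)] .
  then have "|X| =o |underS \<kappa> b|" using F by (simp add: Field_card_of)
  then show ?thesis using b(1) ordIso_imp_ordLeq by blast
qed

lemma card_union_cof:
  assumes k: "Card_order \<kappa>" "infinite (Field \<kappa>)" and cf: "le_cofinality lam \<kappa>"
    and I: "|I| <o lam" and X: "\<forall>i\<in>I. |X i| <o \<kappa>"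
  shows "|\<Union>i\<in>I. X i| <o \<kappa>"
proof -
  have W: "Well_order \<kappa>" using k by (simp add: card_order_on_well_order_on)
  have refl: "\<forall>a\<in>Field \<kappa>. (a, a) \<in> \<kappa>" using W
    by (simp add: well_order_on_def linear_order_on_def partial_order_on_def preorder_on_def refl_on_def)
  have tot: "\<forall>a\<in>Field \<kappa>. \<forall>b\<in>Field \<kappa>. (a, b) \<in> \<kappa> \<or> (b, a) \<in> \<kappa>" using W refl
    unfolding well_order_on_def linear_order_on_def total_on_def by metis
  have trn: "trans \<kappa>" using W
    by (simp add: well_order_on_def linear_order_on_def partial_order_on_def preorder_on_def)
  have "lam \<le>o |Field \<kappa>|" using cf refl unfolding le_cofinality_def by blast
  then have lk: "lam \<le>o \<kappa>" using card_of_Field_ordIso[OF k(1)] ordLeq_ordIso_trans by blast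
  have Ik: "|I| <o \<kappa>" using I lk ordLess_ordLeq_trans by blast
  have "\<forall>i\<in>I. \<exists>b\<in>Field \<kappa>. |X i| \<le>o |underS \<kappa> b|" using X card_lt_underS[OF k(1)] by blast
  then obtain \<alpha> where al: "\<forall>i\<in>I. \<alpha> i \<in> Field \<kappa> \<and> |X i| \<le>o |underS \<kappa> (\<alpha> i)|" by metis
  let ?S = "\<alpha> ` I"
  have "\<not> (\<forall>a\<in>Field \<kappa>. \<exists>b\<in>?S. (a, b) \<in> \<kappa>)"
  proof
    assume "\<forall>a\<in>Field \<kappa>. \<exists>b\<in>?S. (a, b) \<in> \<kappa>"
    moreover have "?S \<subseteq> Field \<kappa>" using al by auto
    ultimately have "lam \<le>o |?S|" using cf unfolding le_cofinality_def by blast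
    moreover have "|?S| \<le>o |I|" by (rule card_of_image)
    ultimately have "lam <o lam" using I ordLeq_transitive ordLeq_ordLess_trans by blast
    then show False using ordLess_irreflexive by blast
  qed
  then obtain a where a: "a \<in> Field \<kappa>" "\<forall>b\<in>?S. (a, b) \<notin> \<kappa>" by blast
  have "\<forall>i\<in>I. |X i| \<le>o |underS \<kappa> a|"
  proof
    fix i assume i: "i \<in> I"
    have ba: "(\<alpha> i, a) \<in> \<kappa>" "(a, \<alpha> i) \<notin> \<kappa>" using a i al tot by blast+
    have "underS \<kappa> (\<alpha> i) \<subseteq> underS \<kappa> a"
    proof
      fix x assume "x \<in> underS \<kappa> (\<alpha> i)"
      then have "(x, \<alpha> i) \<in> \<kappa>" "x \<noteq> \<alpha> i" by (auto simp: underS_def)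
      then show "x \<in> underS \<kappa> a" using ba trn unfolding underS_def trans_def by blast
    qed
    then show "|X i| \<le>o |underS \<kappa> a|" using al i card_of_mono1 ordLeq_transitive by blast
  qed
  then show ?thesis using card_union_bound[OF k Ik a(1)] by blast
qed

end


lemma gen_closure_mono_set:
  assumes "X \<subseteq> Y" "x \<in> gen_closure L A X"
  shows "x \<in> gen_closure L A Y"
  using assms(2)
proof (induction rule: gen_closure.induct)
  case (base x) then show ?case using assms(1) by (auto intro: gen_closure.base)
next
  case (app f xs) then show ?case by (auto intro: gen_closure.app)
qed

lemma lang_wf_Lm:
  assumes "lang_wf L" "relational_expansion Lm L"
  shows "lang_wf Lm"
  using assms unfolding lang_wf_def relational_expansion_def by auto

lemma empty_case:
  fixes \<kappa> :: "'k rel"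
  assumes wf: "lang_wf L" and re: "relational_expansion Lm L" and U: "is_struc L U" "U \<in> K"
    and emp: "\<forall>s. sdom U s = {}" "\<forall>r. rint U r = {}"
    and Fr: "models_Fr Lm \<kappa> (restr_class Lm K) M" and k: "infinite_cardinal \<kappa>" and M: "is_struc Lm M"
  shows "substruc Lm (reduct Lm U) M"
proof -
  let ?R = "reduct Lm U"
  have E: "lsorts Lm = lsorts L" "lfuns Lm = lfuns L" "farity Lm = farity L" "rarity Lm = rarity L"
    "lrels Lm \<subseteq> lrels L"
    using re unfolding relational_expansion_def by auto
  have R: "is_struc Lm ?R" using is_struc_reduct re U(1) by blast
  have "isomorphism Lm id ?R ?R" using R unfolding isomorphism_def embedding_def by auto
  then have Rin: "?R \<in> restr_class Lm K" using R U(2) unfolding restr_class_def by blast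
  have el: "elems Lm ?R = {}" using emp unfolding elems_def by simp
  have gen: "generated_by Lm ?R ((\<lambda>_::'k. undefined) ` {})"
    unfolding generated_by_def using gen_closure_elems[OF lang_wf_Lm[OF wf re] R, of "{}"] el by auto
  have c: "ordLess2 (card_of ({}::'k set)) \<kappa>"
    using k finite_ordLess_infinite[of "card_of ({}::'k set)" \<kappa>] unfolding infinite_cardinal_def
    by (metis card_of_Well_order card_order_on_well_order_on Field_card_of finite.emptyI)
  have "\<forall>(J::'k set) a. ordLess2 (card_of J) \<kappa> \<and> generated_by Lm ?R (a ` J) \<longrightarrow> (\<exists>m. realizes Lm J ?R a M m)"
    using Fr Rin unfolding models_Fr_def by blast
  then have "\<exists>m. realizes Lm {} ?R (\<lambda>_::'k. undefined) M m" using gen c by blast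
  then obtain m where m: "realizes Lm {} ?R (\<lambda>_::'k. undefined) M m" by blast
  show ?thesis
    unfolding substruc_def
  proof (intro conjI ballI allI impI)
    show "is_struc Lm ?R" by fact
    show "is_struc Lm M" by fact
    show "sdom ?R s \<subseteq> sdom M s" for s using emp by simp
    show "fint ?R f xs = fint M f xs" if "f \<in> lfuns Lm" "args_in ?R (farity Lm f) xs" for f xs
    proof -
      have "fint U f xs \<in> sdom U (fsort L f)" using U(1) that E unfolding is_struc_def by auto
      then show ?thesis using emp by simp
    qed
    show "xs \<in> rint ?R r \<longleftrightarrow> xs \<in> rint M r" if r: "r \<in> lrels Lm" "args_in ?R (rarity Lm r) xs" for r xs
    proof -
      have "xs = [] \<and> rarity Lm r = []"
      proof (cases xs)
        case (Cons y ys) then have "y \<in> sdom U (rarity Lm r ! 0)" using r(2) unfolding args_in_def by force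
        then show ?thesis using emp by simp
      qed (use r(2) in \<open>auto simp: args_in_def\<close>)
      then have xs: "xs = []" and ra: "rarity Lm r = []" by auto
      have "atomic_wf Lm (\<lambda>v. sort_of Lm ?R ((\<lambda>_::'k. undefined) v)) {} (Rel r [])"
        using r(1) ra by simp
      then have "holds ?R (\<lambda>_::'k. undefined) (Rel r []) \<longleftrightarrow> holds M m (Rel r [])"
        using m unfolding realizes_def by blast
      then show ?thesis using xs r(1) emp by simp
    qed
  qed
qed



theorem proposition3p2:
  fixes L Lm :: "('s, 'f, 'r) lang"
    and K :: "('s, 'f, 'r, 'u) struc set"
    and M :: "('s, 'f, 'r, 'u) struc"
    and \<kappa> :: "'k rel"
    and lam :: "'l rel"
  assumes "lang_wf L"
    and "relational_expansion Lm L"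
    and "age L K"
    and "strong_fraisse_class L K"
    and "strong_fraisse_class Lm (restr_class Lm K)"
    and "infinite_cardinal \<kappa>"
    and "is_struc Lm M"
    and "models_Fr Lm \<kappa> (restr_class Lm K) M"
    and "Card_order lam"
    and "le_cofinality lam \<kappa>"
    and "closed_lt_unions L lam K"
  shows "\<forall>(\<gamma>::'l rel) A. Well_order \<gamma> \<and> ordLess2 \<gamma> lam \<and> (\<forall>i\<in>Field \<gamma>. A i \<in> Fn L Lm K M \<kappa>)
            \<and> is_chain L \<gamma> A
           \<longrightarrow> (\<exists>B\<in>Fn L Lm K M \<kappa>. \<forall>i\<in>Field \<gamma>. substruc L (A i) B)"
proof (intro allI impI, elim conjE)
  fix \<gamma> :: "'l rel" and A :: "'l \<Rightarrow> ('s, 'f, 'r, 'u) struc"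
  assume W: "Well_order \<gamma>" and lt: "ordLess2 \<gamma> lam" and inF: "\<forall>i\<in>Field \<gamma>. A i \<in> Fn L Lm K M \<kappa>"
    and ch: "is_chain L \<gamma> A"
  note wf = assms(1) and re = assms(2)
  let ?I = "Field \<gamma>"
  let ?U = "chain_union L ?I A"
  have AK: "\<forall>i\<in>?I. A i \<in> K \<and> lt_generated L \<kappa> (A i) \<and> substruc Lm (reduct Lm (A i)) M"
    using inF unfolding Fn_def over_def lt_gen_class_def by simp
  have UK: "?U \<in> K"
    using assms(11)[unfolded closed_lt_unions_def, rule_format, of \<gamma> A] W lt AK ch by blast
  have ageS: "\<forall>B\<in>K. is_struc L B" using assms(3) unfolding age_def by (rule conjunct1)
  have isU: "is_struc L ?U" using UK ageS by blast
  have isA: "\<forall>i\<in>?I. is_struc L (A i)" using AK ageS by blast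
  have tot: "\<forall>i\<in>?I. \<forall>j\<in>?I. i = j \<or> (i, j) \<in> \<gamma> \<or> (j, i) \<in> \<gamma>"
  proof -
    have "Total \<gamma>" using W by (simp add: well_order_on_def linear_order_on_def)
    then show ?thesis unfolding total_on_def by blast
  qed
  have lin: "lin_chain L ?I A"
    unfolding lin_chain_def
  proof (intro ballI)
    fix i j assume "i \<in> ?I" "j \<in> ?I"
    then have "i = j \<or> (i, j) \<in> \<gamma> \<or> (j, i) \<in> \<gamma>" using tot by blast
    then show "i = j \<or> substruc L (A i) (A j) \<or> substruc L (A j) (A i)"
      using ch unfolding is_chain_def by blast
  qed
  have subs: "\<forall>i\<in>?I. substruc L (A i) ?U" using sub_chain[OF _ lin isA isU] by blast
  have k: "Card_order \<kappa>" "infinite (Field \<kappa>)" using assms(6) unfolding infinite_cardinal_def by auto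
  have gen: "lt_generated L \<kappa> ?U"
  proof -
    have "\<forall>i\<in>?I. \<exists>X. ordLess2 (card_of X) \<kappa> \<and> generated_by L (A i) X"
      using AK unfolding lt_generated_def by blast
    from bchoice[OF this] obtain X where X: "\<forall>i\<in>?I. ordLess2 (card_of (X i)) \<kappa> \<and> generated_by L (A i) (X i)"
      by (elim exE)
    let ?X = "\<Union>i\<in>?I. X i"
    have cI: "ordLess2 (card_of ?I) lam"
      by (rule ordLeq_ordLess_trans[OF card_of_least[OF W] lt])
    have cX: "ordLess2 (card_of ?X) \<kappa>"
      by (rule card_union_cof[OF k assms(10) cI]) (use X in blast)
    have elA: "elems L (A i) \<subseteq> elems L ?U" if "i \<in> ?I" for i
      using that unfolding elems_def by (auto simp: chain_union_def)
    have sub1: "?X \<subseteq> elems L ?U" using X elA unfolding generated_by_def by blast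
    have "elems L ?U \<subseteq> gen_closure L ?U ?X"
    proof
      fix x assume "x \<in> elems L ?U"
      then obtain s where s: "s \<in> lsorts L" "x \<in> sdom ?U s" unfolding elems_def by (rule UN_E)
      then obtain i where i: "i \<in> ?I" "x \<in> sdom (A i) s" by (auto simp: chain_union_def)
      have "x \<in> elems L (A i)" using s(1) i(2) unfolding elems_def by (rule UN_I)
      moreover have "generated_by L (A i) (X i)" using X i(1) by simp
      ultimately have "x \<in> gen_closure L (A i) (X i)" unfolding generated_by_def by simp
      then have "x \<in> gen_closure L ?U (X i)" by (rule gen_closure_mono[OF wf bspec[OF subs i(1)]])
      then show "x \<in> gen_closure L ?U ?X" by (rule gen_closure_mono_set[rotated]) (use i(1) in blast)
    qed
    moreover have "gen_closure L ?U ?X \<subseteq> elems L ?U"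
      using gen_closure_elems[OF wf isU sub1] by blast
    ultimately have "generated_by L ?U ?X" using sub1 unfolding generated_by_def by blast
    then show ?thesis using cX unfolding lt_generated_def by blast
  qed
  have red: "substruc Lm (reduct Lm ?U) M"
  proof (cases "?I = {}")
    case True
    show ?thesis
      by (rule empty_case[OF wf re isU UK _ _ assms(8) assms(6) assms(7)])
        (auto simp: chain_union_def True)
  next
    case False
    show ?thesis using reduct_chain_sub[OF wf re False lin isA isU _ assms(7)] AK by blast
  qed
  have "?U \<in> Fn L Lm K M \<kappa>"
    unfolding Fn_def over_def lt_gen_class_def using UK gen red by simp
  then show "\<exists>B\<in>Fn L Lm K M \<kappa>. \<forall>i\<in>Field \<gamma>. substruc L (A i) B" using subs by blast
qed

end
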